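(* For a skew brace $A$, the spaces $\mathrm{Spec}\,A$ and $\mathrm{Spec}(A/\mathrm{Nil}\,A)$ (with their spectral topologies) are homeomorphic.
   Context: A (left) skew brace is a triple $(A,+,\circ)$ where $(A,+)$ and $(A,\circ)$ are groups such that $a\circ(b+c)=a\circ b-a+a\circ c$ for all $a,b,c$; common identity $e$. Put $\lambda_a(b)=-a+a\circ b$ and $a*b=-a+a\circ b-b$. An ideal is a normal subgroup $I$ of both $(A,+)$ and $(A,\circ)$ with $\lambda_a(I)\subseteq I$ for all $a$; for an ideal $I$, $A/I=\{a+I\}$ is a skew brace with $(a+I)+(b+I)=(a+b)+I$, $(a+I)\circ(b+I)=(a\circ b)+I$. A prime ideal is a proper ideal $P$ such that for any subsets $X,Y$ of $A$, $\{x*y\mid x\in X,y\in Y\}\subseteq P$ implies $X\subseteq P$ or $Y\subseteq P$; $\mathrm{Spec}\,A$ is the set of prime ideals, with the spectral topology whose closed sets are $H(I)=\{P\in\mathrm{Spec}\,A\mid I\subseteq P\}$, $I$ an ideal. $\mathrm{Nil}\,A$ is the intersection of all prime ideals of $A$. *)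

theory Defs
  imports "HOL-Analysis.Abstract_Topology" "HOL-Algebra.Coset"
begin

record 'a brace =
  bcarrier :: "'a set"
  badd :: "'a \<Rightarrow> 'a \<Rightarrow> 'a"
  bcirc :: "'a \<Rightarrow> 'a \<Rightarrow> 'a"
  bzero :: 'a

definition add_group :: "'a brace \<Rightarrow> 'a monoid" where
  "add_group A = \<lparr>carrier = bcarrier A, mult = badd A, one = bzero A\<rparr>"

definition circ_group :: "'a brace \<Rightarrow> 'a monoid" where
  "circ_group A = \<lparr>carrier = bcarrier A, mult = bcirc A, one = bzero A\<rparr>"

definition bneg :: "'a brace \<Rightarrow> 'a \<Rightarrow> 'a" where
  "bneg A a = inv\<^bsub>add_group A\<^esub> a"

definition skew_brace :: "'a brace \<Rightarrow> bool" where
  "skew_brace A \<longleftrightarrow> group (add_group A) \<and> group (circ_group A) \<and>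
     (\<forall>a\<in>bcarrier A. \<forall>b\<in>bcarrier A. \<forall>c\<in>bcarrier A.
        bcirc A a (badd A b c) = badd A (badd A (bcirc A a b) (bneg A a)) (bcirc A a c))"

definition blambda :: "'a brace \<Rightarrow> 'a \<Rightarrow> 'a \<Rightarrow> 'a" where
  "blambda A a b = badd A (bneg A a) (bcirc A a b)"

definition bstar :: "'a brace \<Rightarrow> 'a \<Rightarrow> 'a \<Rightarrow> 'a" where
  "bstar A a b = badd A (badd A (bneg A a) (bcirc A a b)) (bneg A b)"

definition brace_ideal :: "'a brace \<Rightarrow> 'a set \<Rightarrow> bool" where
  "brace_ideal A I \<longleftrightarrow> normal I (add_group A) \<and> normal I (circ_group A) \<and>
     (\<forall>a\<in>bcarrier A. blambda A a ` I \<subseteq> I)"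

definition prime_ideal :: "'a brace \<Rightarrow> 'a set \<Rightarrow> bool" where
  "prime_ideal A P \<longleftrightarrow> brace_ideal A P \<and> P \<noteq> bcarrier A \<and>
     (\<forall>X Y. X \<subseteq> bcarrier A \<longrightarrow> Y \<subseteq> bcarrier A \<longrightarrow>
        {bstar A x y | x y. x \<in> X \<and> y \<in> Y} \<subseteq> P \<longrightarrow> X \<subseteq> P \<or> Y \<subseteq> P)"

definition Spec :: "'a brace \<Rightarrow> 'a set set" where
  "Spec A = {P. prime_ideal A P}"

definition Hset :: "'a brace \<Rightarrow> 'a set \<Rightarrow> 'a set set" where
  "Hset A I = {P \<in> Spec A. I \<subseteq> P}"

definition spec_top :: "'a brace \<Rightarrow> 'a set topology" where
  "spec_top A = topology (\<lambda>U. U \<subseteq> Spec A \<and> (\<exists>I. brace_ideal A I \<and> Spec A - U = Hset A I))"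

definition Nil_brace :: "'a brace \<Rightarrow> 'a set" where
  "Nil_brace A = bcarrier A \<inter> \<Inter> (Spec A)"

definition bcoset :: "'a brace \<Rightarrow> 'a \<Rightarrow> 'a set \<Rightarrow> 'a set" where
  "bcoset A a I = (\<lambda>i. badd A a i) ` I"

text \<open>Quotient skew brace A/I: (a+I)+(b+I) = (a+b)+I, (a+I)o(b+I) = (a o b)+I.\<close>
definition quotient_brace :: "'a brace \<Rightarrow> 'a set \<Rightarrow> 'a set brace" where
  "quotient_brace A I = \<lparr>
     bcarrier = {bcoset A a I | a. a \<in> bcarrier A},
     badd = (\<lambda>X Y. \<Union>{bcoset A (badd A a b) I | a b. a \<in> bcarrier A \<and> b \<in> bcarrier A
                         \<and> X = bcoset A a I \<and> Y = bcoset A b I}),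
     bcirc = (\<lambda>X Y. \<Union>{bcoset A (bcirc A a b) I | a b. a \<in> bcarrier A \<and> b \<in> bcarrier A
                         \<and> X = bcoset A a I \<and> Y = bcoset A b I}),
     bzero = bcoset A (bzero A) I \<rparr>"

end

theory Submission
  imports Defs
begin

lemma add_group_simps[simp]:
  "carrier (add_group A) = bcarrier A" "mult (add_group A) = badd A" "one (add_group A) = bzero A"
  by (simp_all add: add_group_def)

lemma circ_group_simps[simp]:
  "carrier (circ_group A) = bcarrier A" "mult (circ_group A) = bcirc A" "one (circ_group A) = bzero A"
  by (simp_all add: circ_group_def)

locale sbrace =
  fixes A :: "'a brace"
  assumes sb: "skew_brace A"
begin

sublocale G: group "add_group A" using sb by (simp add: skew_brace_def)
sublocale C: group "circ_group A" using sb by (simp add: skew_brace_def)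

abbreviation "cr \<equiv> bcarrier A"
abbreviation pl (infixl "\<oplus>" 65) where "pl a b \<equiv> badd A a b"
abbreviation ci (infixl "\<cdot>" 70) where "ci a b \<equiv> bcirc A a b"
abbreviation "ng a \<equiv> bneg A a"
abbreviation "ze \<equiv> bzero A"
abbreviation "cinv a \<equiv> inv\<^bsub>circ_group A\<^esub> a"
abbreviation "lam a b \<equiv> blambda A a b"

lemma add_closed[simp]: "a \<in> cr \<Longrightarrow> b \<in> cr \<Longrightarrow> a \<oplus> b \<in> cr"
  using G.m_closed by simp
lemma circ_closed[simp]: "a \<in> cr \<Longrightarrow> b \<in> cr \<Longrightarrow> a \<cdot> b \<in> cr"
  using C.m_closed by simp
lemma ze_closed[simp]: "ze \<in> cr" using G.one_closed by simp
lemma ng_closed[simp]: "a \<in> cr \<Longrightarrow> ng a \<in> cr" unfolding bneg_def using G.inv_closed by simp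
lemma cinv_closed[simp]: "a \<in> cr \<Longrightarrow> cinv a \<in> cr" using C.inv_closed by simp
lemma add_assoc[simp]: "a \<in> cr \<Longrightarrow> b \<in> cr \<Longrightarrow> c \<in> cr \<Longrightarrow> (a \<oplus> b) \<oplus> c = a \<oplus> (b \<oplus> c)"
  using G.m_assoc by simp
lemma circ_assoc[simp]: "a \<in> cr \<Longrightarrow> b \<in> cr \<Longrightarrow> c \<in> cr \<Longrightarrow> (a \<cdot> b) \<cdot> c = a \<cdot> (b \<cdot> c)"
  using C.m_assoc by simp
lemma add_ze[simp]: "a \<in> cr \<Longrightarrow> a \<oplus> ze = a" "a \<in> cr \<Longrightarrow> ze \<oplus> a = a"
  using G.r_one G.l_one by simp_all
lemma circ_ze[simp]: "a \<in> cr \<Longrightarrow> a \<cdot> ze = a" "a \<in> cr \<Longrightarrow> ze \<cdot> a = a"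
  using C.r_one C.l_one by simp_all
lemma ng_add[simp]: "a \<in> cr \<Longrightarrow> ng a \<oplus> a = ze" "a \<in> cr \<Longrightarrow> a \<oplus> ng a = ze"
  unfolding bneg_def using G.r_inv G.l_inv by simp_all
lemma ng_add2[simp]: "a \<in> cr \<Longrightarrow> b \<in> cr \<Longrightarrow> ng a \<oplus> (a \<oplus> b) = b" "a \<in> cr \<Longrightarrow> b \<in> cr \<Longrightarrow> a \<oplus> (ng a \<oplus> b) = b"
  by (simp_all flip: add_assoc)
lemma cinv_circ[simp]: "a \<in> cr \<Longrightarrow> cinv a \<cdot> a = ze" "a \<in> cr \<Longrightarrow> a \<cdot> cinv a = ze"
  using C.r_inv C.l_inv by simp_all
lemma cinv_circ2[simp]: "a \<in> cr \<Longrightarrow> b \<in> cr \<Longrightarrow> cinv a \<cdot> (a \<cdot> b) = b" "a \<in> cr \<Longrightarrow> b \<in> cr \<Longrightarrow> a \<cdot> (cinv a \<cdot> b) = b"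
  by (simp_all flip: circ_assoc)
lemma ng_ng[simp]: "a \<in> cr \<Longrightarrow> ng (ng a) = a"
  unfolding bneg_def using G.inv_inv by simp
lemma ng_ze[simp]: "ng ze = ze"
  unfolding bneg_def using G.inv_one by simp
lemma ng_of_add[simp]: "a \<in> cr \<Longrightarrow> b \<in> cr \<Longrightarrow> ng (a \<oplus> b) = ng b \<oplus> ng a"
  unfolding bneg_def using G.inv_mult_group by simp
lemma add_left_cancel: "a \<in> cr \<Longrightarrow> b \<in> cr \<Longrightarrow> c \<in> cr \<Longrightarrow> (a \<oplus> b = a \<oplus> c) = (b = c)"
  by (metis ng_add2(1))

lemma brace: "a \<in> cr \<Longrightarrow> b \<in> cr \<Longrightarrow> c \<in> cr \<Longrightarrow> a \<cdot> (b \<oplus> c) = (a \<cdot> b) \<oplus> ng a \<oplus> (a \<cdot> c)"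
  using sb unfolding skew_brace_def by blast

lemma lam_closed[simp]: "a \<in> cr \<Longrightarrow> b \<in> cr \<Longrightarrow> lam a b \<in> cr"
  unfolding blambda_def by simp

lemma circ_eq: "a \<in> cr \<Longrightarrow> b \<in> cr \<Longrightarrow> a \<cdot> b = a \<oplus> lam a b"
  unfolding blambda_def by simp

lemma lam_add: "a \<in> cr \<Longrightarrow> b \<in> cr \<Longrightarrow> c \<in> cr \<Longrightarrow> lam a (b \<oplus> c) = lam a b \<oplus> lam a c"
  unfolding blambda_def by (simp add: brace)

lemma lam_ze[simp]: "b \<in> cr \<Longrightarrow> lam ze b = b"
  unfolding blambda_def by simp

lemma lam_of_ze[simp]: "a \<in> cr \<Longrightarrow> lam a ze = ze"
  unfolding blambda_def by simp

lemma lam_ng: "a \<in> cr \<Longrightarrow> b \<in> cr \<Longrightarrow> lam a (ng b) = ng (lam a b)"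
proof -
  assume a: "a \<in> cr" and b: "b \<in> cr"
  have "lam a (b \<oplus> ng b) = ze" using a b by simp
  hence "lam a b \<oplus> lam a (ng b) = ze" using a b lam_add[of a b "ng b"] by simp
  hence "ng (lam a b) \<oplus> (lam a b \<oplus> lam a (ng b)) = ng (lam a b)" using a b by simp
  thus ?thesis using a b by simp
qed

lemma lam_comp: "a \<in> cr \<Longrightarrow> b \<in> cr \<Longrightarrow> c \<in> cr \<Longrightarrow> lam a (lam b c) = lam (a \<cdot> b) c"
proof -
  assume a: "a \<in> cr" and b: "b \<in> cr" and c: "c \<in> cr"
  have "lam a (lam b c) = lam a (ng b) \<oplus> lam a (b \<cdot> c)"
    using a b c by (simp add: blambda_def[of A b] lam_add)
  also have "\<dots> = ng (lam a b) \<oplus> lam a (b \<cdot> c)" using a b by (simp add: lam_ng)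
  also have "\<dots> = ng (a \<cdot> b) \<oplus> a \<oplus> (ng a \<oplus> (a \<cdot> (b \<cdot> c)))"
    using a b c by (simp add: blambda_def)
  also have "\<dots> = lam (a \<cdot> b) c" using a b c by (simp add: blambda_def)
  finally show ?thesis .
qed

lemma lam_inv: "a \<in> cr \<Longrightarrow> b \<in> cr \<Longrightarrow> lam a (lam (cinv a) b) = b"
  by (simp add: lam_comp)
lemma lam_inv2: "a \<in> cr \<Longrightarrow> b \<in> cr \<Longrightarrow> lam (cinv a) (lam a b) = b"
  by (simp add: lam_comp)

lemma inv_add_group[simp]: "inv\<^bsub>add_group A\<^esub> a = ng a" by (simp add: bneg_def)

lemma idealD:
  assumes "brace_ideal A I"
  shows ideal_sub: "I \<subseteq> cr" and ideal_ze: "ze \<in> I"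
    and ideal_add: "\<And>a b. a \<in> I \<Longrightarrow> b \<in> I \<Longrightarrow> a \<oplus> b \<in> I"
    and ideal_ng: "\<And>a. a \<in> I \<Longrightarrow> ng a \<in> I"
    and ideal_conj: "\<And>x h. x \<in> cr \<Longrightarrow> h \<in> I \<Longrightarrow> x \<oplus> (h \<oplus> ng x) \<in> I"
    and ideal_circ: "\<And>a b. a \<in> I \<Longrightarrow> b \<in> I \<Longrightarrow> a \<cdot> b \<in> I"
    and ideal_cinv: "\<And>a. a \<in> I \<Longrightarrow> cinv a \<in> I"
    and ideal_cconj: "\<And>x h. x \<in> cr \<Longrightarrow> h \<in> I \<Longrightarrow> x \<cdot> (h \<cdot> cinv x) \<in> I"
    and ideal_lam: "\<And>x h. x \<in> cr \<Longrightarrow> h \<in> I \<Longrightarrow> lam x h \<in> I"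
proof -
  have n1: "I \<lhd> add_group A" and n2: "I \<lhd> circ_group A" and l: "\<forall>a\<in>cr. lam a ` I \<subseteq> I"
    using assms unfolding brace_ideal_def by auto
  have s1: "subgroup I (add_group A)" and s2: "subgroup I (circ_group A)"
    using n1 n2 normal_imp_subgroup by auto
  show "I \<subseteq> cr" using subgroup.subset[OF s1] by simp
  show "ze \<in> I" using subgroup.one_closed[OF s1] by simp
  show "\<And>a b. a \<in> I \<Longrightarrow> b \<in> I \<Longrightarrow> a \<oplus> b \<in> I" using subgroup.m_closed[OF s1] by simp
  show "\<And>a. a \<in> I \<Longrightarrow> ng a \<in> I" using subgroup.m_inv_closed[OF s1] by simp
  show "\<And>x h. x \<in> cr \<Longrightarrow> h \<in> I \<Longrightarrow> x \<oplus> (h \<oplus> ng x) \<in> I" using G.normal_invE(2)[OF n1] subgroup.subset[OF s1] by (simp add: subset_iff)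
  show "\<And>a b. a \<in> I \<Longrightarrow> b \<in> I \<Longrightarrow> a \<cdot> b \<in> I" using subgroup.m_closed[OF s2] by simp
  show "\<And>a. a \<in> I \<Longrightarrow> cinv a \<in> I" using subgroup.m_inv_closed[OF s2] by simp
  show "\<And>x h. x \<in> cr \<Longrightarrow> h \<in> I \<Longrightarrow> x \<cdot> (h \<cdot> cinv x) \<in> I" using C.normal_invE(2)[OF n2] subgroup.subset[OF s1] by (simp add: subset_iff)
  show "\<And>x h. x \<in> cr \<Longrightarrow> h \<in> I \<Longrightarrow> lam x h \<in> I" using l by blast
qed

lemma idealI:
  assumes "I \<subseteq> cr" "ze \<in> I"
    "\<And>a b. a \<in> I \<Longrightarrow> b \<in> I \<Longrightarrow> a \<oplus> b \<in> I"
    "\<And>a. a \<in> I \<Longrightarrow> ng a \<in> I"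
    "\<And>x h. x \<in> cr \<Longrightarrow> h \<in> I \<Longrightarrow> x \<oplus> (h \<oplus> ng x) \<in> I"
    "\<And>a b. a \<in> I \<Longrightarrow> b \<in> I \<Longrightarrow> a \<cdot> b \<in> I"
    "\<And>a. a \<in> I \<Longrightarrow> cinv a \<in> I"
    "\<And>x h. x \<in> cr \<Longrightarrow> h \<in> I \<Longrightarrow> x \<cdot> (h \<cdot> cinv x) \<in> I"
    "\<And>x h. x \<in> cr \<Longrightarrow> h \<in> I \<Longrightarrow> lam x h \<in> I"
  shows "brace_ideal A I"
proof -
  have s1: "subgroup I (add_group A)"
    by (rule G.subgroupI) (use assms in auto)
  have s2: "subgroup I (circ_group A)"
    by (rule C.subgroupI) (use assms in auto)
  have "I \<lhd> add_group A" by (rule G.normal_invI[OF s1]) (use assms in \<open>auto simp: subset_iff\<close>)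
  moreover have "I \<lhd> circ_group A" by (rule C.normal_invI[OF s2]) (use assms in \<open>auto simp: subset_iff\<close>)
  ultimately show ?thesis unfolding brace_ideal_def using assms(9) by blast
qed

lemma ideal_Inter: "\<forall>I\<in>S. brace_ideal A I \<Longrightarrow> brace_ideal A (cr \<inter> \<Inter>S)"
  by (rule idealI) (auto intro: ideal_ze ideal_add ideal_ng ideal_conj ideal_circ ideal_cinv ideal_cconj ideal_lam)

lemma ideal_carrier: "brace_ideal A cr"
  by (rule idealI) auto

lemma prime_sub: "prime_ideal A P \<Longrightarrow> P \<subseteq> cr"
  unfolding prime_ideal_def using ideal_sub by blast

lemma star_in_ideals:
  assumes I: "brace_ideal A I" and J: "brace_ideal A J" and a: "a \<in> I" and b: "b \<in> J"
  shows "bstar A a b \<in> I \<inter> J"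
proof
  have ac: "a \<in> cr" using ideal_sub[OF I] a by auto
  have bc: "b \<in> cr" using ideal_sub[OF J] b by auto
  show "bstar A a b \<in> J"
    unfolding bstar_def using ideal_lam[OF J ac b] ideal_ng[OF J b] ideal_add[OF J]
    by (simp add: blambda_def)
  define i where "i = cinv b \<cdot> (a \<cdot> b)"
  have i: "i \<in> I" unfolding i_def using ideal_cconj[OF I cinv_closed[OF bc] a] bc by simp
  have ic: "i \<in> cr" using ideal_sub[OF I] i by auto
  have "a \<cdot> b = b \<cdot> i" unfolding i_def using ac bc by simp
  also have "\<dots> = b \<oplus> lam b i" using bc ic by (simp add: circ_eq)
  finally have e: "a \<cdot> b = b \<oplus> lam b i" .
  have "bstar A a b = ng a \<oplus> (b \<oplus> (lam b i \<oplus> ng b))"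
    unfolding bstar_def e using ac bc ic by simp
  moreover have "b \<oplus> (lam b i \<oplus> ng b) \<in> I"
    using ideal_conj[OF I bc ideal_lam[OF I bc i]] .
  ultimately show "bstar A a b \<in> I" using ideal_add[OF I] ideal_ng[OF I a] by simp
qed


abbreviation "opn U \<equiv> U \<subseteq> Spec A \<and> (\<exists>I. brace_ideal A I \<and> Spec A - U = Hset A I)"

lemma prime_ideal_ideal: "P \<in> Spec A \<Longrightarrow> brace_ideal A P"
  unfolding Spec_def prime_ideal_def by blast

lemma istop: "istopology (\<lambda>U. opn U)"
  unfolding istopology_def
proof (rule conjI)
  show "\<forall>S T. opn S \<longrightarrow> opn T \<longrightarrow> opn (S \<inter> T)"
  proof (intro allI impI)
  fix S T assume S: "opn S" and T: "opn T"
  then obtain I J where I: "brace_ideal A I" "Spec A - S = Hset A I"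
    and J: "brace_ideal A J" "Spec A - T = Hset A J" by blast
  have IJ: "cr \<inter> \<Inter>{I, J} = I \<inter> J" using ideal_sub[OF I(1)] by auto
  have ij: "brace_ideal A (I \<inter> J)" using ideal_Inter[of "{I,J}"] I J IJ by simp
  have "Spec A - (S \<inter> T) = Hset A (I \<inter> J)"
  proof -
    have "Spec A - (S \<inter> T) = Hset A I \<union> Hset A J" using I J by blast
    also have "\<dots> = Hset A (I \<inter> J)"
    proof
      show "Hset A I \<union> Hset A J \<subseteq> Hset A (I \<inter> J)" unfolding Hset_def by blast
      show "Hset A (I \<inter> J) \<subseteq> Hset A I \<union> Hset A J"
      proof
        fix P assume P: "P \<in> Hset A (I \<inter> J)"
        hence Pp: "prime_ideal A P" and PIJ: "I \<inter> J \<subseteq> P" unfolding Hset_def Spec_def by auto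
        have "{bstar A x y | x y. x \<in> I \<and> y \<in> J} \<subseteq> P"
          using star_in_ideals[OF I(1) J(1)] PIJ by blast
        hence "I \<subseteq> P \<or> J \<subseteq> P"
          using Pp ideal_sub[OF I(1)] ideal_sub[OF J(1)] unfolding prime_ideal_def by blast
        thus "P \<in> Hset A I \<union> Hset A J" using P unfolding Hset_def by auto
      qed
    qed
    finally show ?thesis .
  qed
  thus "opn (S \<inter> T)" using S ij by blast
qed
next
  show "\<forall>K. (\<forall>U\<in>K. opn U) \<longrightarrow> opn (\<Union>K)"
  proof (intro allI impI)
  fix K assume K: "\<forall>U\<in>K. opn U"
  define J where "J = cr \<inter> \<Inter>(Spec A - \<Union>K)"
  have Jid: "brace_ideal A J" unfolding J_def
    by (rule ideal_Inter) (auto intro: prime_ideal_ideal)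
  have "Spec A - \<Union>K = Hset A J"
  proof
    show "Spec A - \<Union>K \<subseteq> Hset A J" unfolding Hset_def J_def by blast
    show "Hset A J \<subseteq> Spec A - \<Union>K"
    proof
      fix P assume P: "P \<in> Hset A J"
      hence PS: "P \<in> Spec A" and JP: "J \<subseteq> P" unfolding Hset_def by auto
      have "P \<notin> U" if U: "U \<in> K" for U
      proof -
        obtain I where I: "brace_ideal A I" "Spec A - U = Hset A I" using K U by blast
        have "I \<subseteq> J"
        proof -
          have "I \<subseteq> Q" if "Q \<in> Spec A - \<Union>K" for Q
            using that U I(2) unfolding Hset_def by blast
          thus ?thesis unfolding J_def using ideal_sub[OF I(1)] by blast
        qed
        hence "P \<in> Hset A I" using JP PS unfolding Hset_def by auto
        thus ?thesis using I(2) by blast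
      qed
      thus "P \<in> Spec A - \<Union>K" using PS by blast
    qed
  qed
  moreover have "\<Union>K \<subseteq> Spec A" using K by blast
  ultimately show "opn (\<Union>K)" using Jid by blast
qed
qed

lemma openin_spec: "openin (spec_top A) U \<longleftrightarrow> opn U"
  unfolding spec_top_def using istop by simp

lemma Hset_sub: "Hset A I \<subseteq> Spec A" unfolding Hset_def by blast

lemma topspace_spec: "topspace (spec_top A) = Spec A"
proof
  show "topspace (spec_top A) \<subseteq> Spec A" unfolding topspace_def openin_spec by blast
  have "Hset A cr = {}"
    unfolding Hset_def Spec_def prime_ideal_def using ideal_sub by blast
  hence "opn (Spec A)" using ideal_carrier by auto
  thus "Spec A \<subseteq> topspace (spec_top A)" unfolding topspace_def openin_spec by blast
qed

lemma closedin_spec: "closedin (spec_top A) C \<longleftrightarrow> (\<exists>I. brace_ideal A I \<and> C = Hset A I)"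
proof
  assume "closedin (spec_top A) C"
  hence "C \<subseteq> Spec A" "opn (Spec A - C)"
    unfolding closedin_def topspace_spec openin_spec by auto
  thus "\<exists>I. brace_ideal A I \<and> C = Hset A I" by (metis double_diff order_refl)
next
  assume "\<exists>I. brace_ideal A I \<and> C = Hset A I"
  then obtain I where "brace_ideal A I" "C = Hset A I" by blast
  moreover have "Spec A - (Spec A - Hset A I) = Hset A I" using Hset_sub by blast
  ultimately show "closedin (spec_top A) C"
    unfolding closedin_def topspace_spec openin_spec using Hset_sub by auto
qed


end

lemma group_image:
  assumes G: "group G" and car: "carrier H = f ` carrier G"
    and mul: "\<And>x y. x \<in> carrier G \<Longrightarrow> y \<in> carrier G \<Longrightarrow> f x \<otimes>\<^bsub>H\<^esub> f y = f (x \<otimes>\<^bsub>G\<^esub> y)"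
    and one: "\<one>\<^bsub>H\<^esub> = f \<one>\<^bsub>G\<^esub>"
  shows "group H" "group_hom G H f"
proof -
  interpret G: group G by (rule G)
  show gH: "group H"
  proof (rule groupI)
    fix x y assume "x \<in> carrier H" "y \<in> carrier H"
    then obtain a b where "a \<in> carrier G" "b \<in> carrier G" "x = f a" "y = f b" using car by auto
    thus "x \<otimes>\<^bsub>H\<^esub> y \<in> carrier H" using mul car by auto
  next
    show "\<one>\<^bsub>H\<^esub> \<in> carrier H" using one car by auto
  next
    fix x y z assume "x \<in> carrier H" "y \<in> carrier H" "z \<in> carrier H"
    then obtain a b c where "a \<in> carrier G" "b \<in> carrier G" "c \<in> carrier G" "x = f a" "y = f b" "z = f c"
      using car by auto
    thus "x \<otimes>\<^bsub>H\<^esub> y \<otimes>\<^bsub>H\<^esub> z = x \<otimes>\<^bsub>H\<^esub> (y \<otimes>\<^bsub>H\<^esub> z)" using mul G.m_assoc by simp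
  next
    fix x assume "x \<in> carrier H"
    then obtain a where "a \<in> carrier G" "x = f a" using car by auto
    thus "\<one>\<^bsub>H\<^esub> \<otimes>\<^bsub>H\<^esub> x = x" using mul[OF G.one_closed] one by simp
  next
    fix x assume "x \<in> carrier H"
    then obtain a where a: "a \<in> carrier G" "x = f a" using car by auto
    hence "f (inv\<^bsub>G\<^esub> a) \<otimes>\<^bsub>H\<^esub> x = \<one>\<^bsub>H\<^esub>" using mul one by simp
    thus "\<exists>y\<in>carrier H. y \<otimes>\<^bsub>H\<^esub> x = \<one>\<^bsub>H\<^esub>" using a car by blast
  qed
  show "group_hom G H f"
    unfolding group_hom_def group_hom_axioms_def hom_def
    using G gH car mul by auto
qed

lemma skew_brace_image:
  assumes A: "skew_brace A" and car: "bcarrier B = f ` bcarrier A"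
    and add: "\<And>x y. x \<in> bcarrier A \<Longrightarrow> y \<in> bcarrier A \<Longrightarrow> badd B (f x) (f y) = f (badd A x y)"
    and circ: "\<And>x y. x \<in> bcarrier A \<Longrightarrow> y \<in> bcarrier A \<Longrightarrow> bcirc B (f x) (f y) = f (bcirc A x y)"
    and zero: "bzero B = f (bzero A)"
  shows "skew_brace B"
proof -
  interpret sbrace A using A by (simp add: sbrace_def)
  have g1: "group (add_group B)" "group_hom (add_group A) (add_group B) f"
    using group_image[of "add_group A" "add_group B" f] G.is_group car add zero by auto
  have g2: "group (circ_group B)"
    using group_image[of "circ_group A" "circ_group B" f] C.is_group car circ zero by auto
  have ng: "bneg B (f x) = f (bneg A x)" if "x \<in> bcarrier A" for x
    using group_hom.hom_inv[OF g1(2)] that unfolding bneg_def by simp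
  have "bcirc B a (badd B b c) = badd B (badd B (bcirc B a b) (bneg B a)) (bcirc B a c)"
    if H: "a \<in> bcarrier B" "b \<in> bcarrier B" "c \<in> bcarrier B" for a b c
  proof -
    obtain x y z where "x \<in> cr" "y \<in> cr" "z \<in> cr" "a = f x" "b = f y" "c = f z"
      using H car by auto
    thus ?thesis by (simp add: add circ ng brace)
  qed
  thus ?thesis unfolding skew_brace_def using g1 g2 by blast
qed

lemma primeD:
  assumes P: "prime_ideal A P" and X: "X \<subseteq> bcarrier A" and Y: "Y \<subseteq> bcarrier A"
    and S: "\<And>x y. x \<in> X \<Longrightarrow> y \<in> Y \<Longrightarrow> bstar A x y \<in> P"
  shows "X \<subseteq> P \<or> Y \<subseteq> P"
proof -
  have H: "\<forall>X Y. X \<subseteq> bcarrier A \<longrightarrow> Y \<subseteq> bcarrier A \<longrightarrow>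
        {bstar A x y | x y. x \<in> X \<and> y \<in> Y} \<subseteq> P \<longrightarrow> X \<subseteq> P \<or> Y \<subseteq> P"
    using P unfolding prime_ideal_def by (elim conjE)
  have "{bstar A x y | x y. x \<in> X \<and> y \<in> Y} \<subseteq> P" using S by blast
  thus ?thesis using H X Y by simp
qed

lemma primeI:
  assumes "brace_ideal A P" "P \<noteq> bcarrier A"
    and H: "\<And>X Y. X \<subseteq> bcarrier A \<Longrightarrow> Y \<subseteq> bcarrier A \<Longrightarrow>
       (\<And>x y. x \<in> X \<Longrightarrow> y \<in> Y \<Longrightarrow> bstar A x y \<in> P) \<Longrightarrow> X \<subseteq> P \<or> Y \<subseteq> P"
  shows "prime_ideal A P"
  unfolding prime_ideal_def
proof (intro conjI allI impI)
  fix X Y assume "X \<subseteq> bcarrier A" "Y \<subseteq> bcarrier A" "{bstar A x y | x y. x \<in> X \<and> y \<in> Y} \<subseteq> P"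
  thus "X \<subseteq> P \<or> Y \<subseteq> P" using H by blast
qed (use assms in auto)

locale bhom = A: sbrace A + B: sbrace B for A :: "'a brace" and B :: "'b brace" +
  fixes f :: "'a \<Rightarrow> 'b"
  assumes surj: "f ` bcarrier A = bcarrier B"
    and f_add: "\<And>x y. x \<in> bcarrier A \<Longrightarrow> y \<in> bcarrier A \<Longrightarrow> f (badd A x y) = badd B (f x) (f y)"
    and f_circ: "\<And>x y. x \<in> bcarrier A \<Longrightarrow> y \<in> bcarrier A \<Longrightarrow> f (bcirc A x y) = bcirc B (f x) (f y)"
begin

lemma f_closed[simp]: "x \<in> bcarrier A \<Longrightarrow> f x \<in> bcarrier B" using surj by auto

lemma gh1: "group_hom (add_group A) (add_group B) f"
  unfolding group_hom_def group_hom_axioms_def hom_def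
  using A.G.is_group B.G.is_group f_add by auto
lemma gh2: "group_hom (circ_group A) (circ_group B) f"
  unfolding group_hom_def group_hom_axioms_def hom_def
  using A.C.is_group B.C.is_group f_circ by auto

lemma f_ze[simp]: "f (bzero A) = bzero B" using group_hom.hom_one[OF gh1] by simp
lemma f_ng: "x \<in> bcarrier A \<Longrightarrow> f (bneg A x) = bneg B (f x)"
  using group_hom.hom_inv[OF gh1] unfolding bneg_def by simp
lemma f_cinv: "x \<in> bcarrier A \<Longrightarrow> f (inv\<^bsub>circ_group A\<^esub> x) = inv\<^bsub>circ_group B\<^esub> (f x)"
  using group_hom.hom_inv[OF gh2] by simp
lemma f_lam: "x \<in> bcarrier A \<Longrightarrow> y \<in> bcarrier A \<Longrightarrow> f (blambda A x y) = blambda B (f x) (f y)"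
  unfolding blambda_def by (simp add: f_add f_circ f_ng)
lemma f_star: "x \<in> bcarrier A \<Longrightarrow> y \<in> bcarrier A \<Longrightarrow> f (bstar A x y) = bstar B (f x) (f y)"
  unfolding bstar_def by (simp add: f_add f_circ f_ng)

lemma pre_ideal:
  assumes J: "brace_ideal B J"
  shows "brace_ideal A (bcarrier A \<inter> f -` J)"
proof (rule A.idealI)
  show "bcarrier A \<inter> f -` J \<subseteq> bcarrier A" by blast
  show "bzero A \<in> bcarrier A \<inter> f -` J" using B.ideal_ze[OF J] by simp
  show "badd A a b \<in> bcarrier A \<inter> f -` J" if H: "a \<in> bcarrier A \<inter> f -` J" "b \<in> bcarrier A \<inter> f -` J" for a b
    using H B.ideal_add[OF J, of "f a" "f b"] by (simp add: f_add)
  show "bneg A a \<in> bcarrier A \<inter> f -` J" if H: "a \<in> bcarrier A \<inter> f -` J" for a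
    using H B.ideal_ng[OF J, of "f a"] by (simp add: f_ng)
  show "bcirc A a b \<in> bcarrier A \<inter> f -` J" if H: "a \<in> bcarrier A \<inter> f -` J" "b \<in> bcarrier A \<inter> f -` J" for a b
    using H B.ideal_circ[OF J, of "f a" "f b"] by (simp add: f_circ)
  show "inv\<^bsub>circ_group A\<^esub> a \<in> bcarrier A \<inter> f -` J" if H: "a \<in> bcarrier A \<inter> f -` J" for a
    using H B.ideal_cinv[OF J, of "f a"] by (simp add: f_cinv)
  show "badd A x (badd A h (bneg A x)) \<in> bcarrier A \<inter> f -` J" if H: "x \<in> bcarrier A" "h \<in> bcarrier A \<inter> f -` J" for x h
    using H B.ideal_conj[OF J, of "f x" "f h"] by (simp add: f_add f_ng)
  show "bcirc A x (bcirc A h (inv\<^bsub>circ_group A\<^esub> x)) \<in> bcarrier A \<inter> f -` J" if H: "x \<in> bcarrier A" "h \<in> bcarrier A \<inter> f -` J" for x h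
    using H B.ideal_cconj[OF J, of "f x" "f h"] by (simp add: f_circ f_cinv)
  show "blambda A x h \<in> bcarrier A \<inter> f -` J" if H: "x \<in> bcarrier A" "h \<in> bcarrier A \<inter> f -` J" for x h
    using H B.ideal_lam[OF J, of "f x" "f h"] by (simp add: f_lam)
qed

lemma img_ideal:
  assumes I: "brace_ideal A I"
  shows "brace_ideal B (f ` I)"
proof -
  have sub: "I \<subseteq> bcarrier A" by (rule A.ideal_sub[OF I])
  have pre: "\<And>y. y \<in> bcarrier B \<Longrightarrow> \<exists>x\<in>bcarrier A. y = f x" using surj by auto
  show ?thesis
  proof (rule B.idealI)
    show "f ` I \<subseteq> bcarrier B" using sub by auto
    show "bzero B \<in> f ` I" using A.ideal_ze[OF I] by (metis f_ze image_eqI)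
    show "badd B a b \<in> f ` I" if H: "a \<in> f ` I" "b \<in> f ` I" for a b
    proof -
      obtain x y where xy: "x \<in> I" "y \<in> I" "a = f x" "b = f y" using H by blast
      hence "badd B a b = f (badd A x y)" using sub by (auto simp: f_add subset_iff)
      thus ?thesis using A.ideal_add[OF I xy(1,2)] by blast
    qed
    show "bneg B a \<in> f ` I" if H: "a \<in> f ` I" for a
    proof -
      obtain x where xy: "x \<in> I" "a = f x" using H by blast
      hence "bneg B a = f (bneg A x)" using sub by (auto simp: f_ng subset_iff)
      thus ?thesis using A.ideal_ng[OF I xy(1)] by blast
    qed
    show "bcirc B a b \<in> f ` I" if H: "a \<in> f ` I" "b \<in> f ` I" for a b
    proof -
      obtain x y where xy: "x \<in> I" "y \<in> I" "a = f x" "b = f y" using H by blast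
      hence "bcirc B a b = f (bcirc A x y)" using sub by (auto simp: f_circ subset_iff)
      thus ?thesis using A.ideal_circ[OF I xy(1,2)] by blast
    qed
    show "inv\<^bsub>circ_group B\<^esub> a \<in> f ` I" if H: "a \<in> f ` I" for a
    proof -
      obtain x where xy: "x \<in> I" "a = f x" using H by blast
      hence "inv\<^bsub>circ_group B\<^esub> a = f (inv\<^bsub>circ_group A\<^esub> x)" using sub by (auto simp: f_cinv subset_iff)
      thus ?thesis using A.ideal_cinv[OF I xy(1)] by blast
    qed
    show "badd B x (badd B h (bneg B x)) \<in> f ` I" if H: "x \<in> bcarrier B" "h \<in> f ` I" for x h
    proof -
      obtain a where a: "a \<in> bcarrier A" "x = f a" using pre H by blast
      obtain i where i: "i \<in> I" "h = f i" using H by blast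
      have "badd B x (badd B h (bneg B x)) = f (badd A a (badd A i (bneg A a)))"
        using a i sub by (auto simp: f_add f_ng)
      thus ?thesis using A.ideal_conj[OF I a(1) i(1)] by blast
    qed
    show "bcirc B x (bcirc B h (inv\<^bsub>circ_group B\<^esub> x)) \<in> f ` I" if H: "x \<in> bcarrier B" "h \<in> f ` I" for x h
    proof -
      obtain a where a: "a \<in> bcarrier A" "x = f a" using pre H by blast
      obtain i where i: "i \<in> I" "h = f i" using H by blast
      have "bcirc B x (bcirc B h (inv\<^bsub>circ_group B\<^esub> x)) = f (bcirc A a (bcirc A i (inv\<^bsub>circ_group A\<^esub> a)))"
        using a i sub by (auto simp: f_circ f_cinv)
      thus ?thesis using A.ideal_cconj[OF I a(1) i(1)] by blast
    qed
    show "blambda B x h \<in> f ` I" if H: "x \<in> bcarrier B" "h \<in> f ` I" for x h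
    proof -
      obtain a where a: "a \<in> bcarrier A" "x = f a" using pre H by blast
      obtain i where i: "i \<in> I" "h = f i" using H by blast
      have "blambda B x h = f (blambda A a i)"
        using a i sub by (auto simp: f_lam)
      thus ?thesis using A.ideal_lam[OF I a(1) i(1)] by blast
    qed
  qed
qed

definition "kerf = {a \<in> bcarrier A. f a = bzero B}"

lemma ker_lemma:
  assumes I: "brace_ideal A I" and K: "kerf \<subseteq> I" and a: "a \<in> bcarrier A" and p: "p \<in> I"
    and e: "f a = f p"
  shows "a \<in> I"
proof -
  have pc: "p \<in> bcarrier A" using A.ideal_sub[OF I] p by auto
  have "f (badd A (bneg A p) a) = bzero B" using pc a e by (simp add: f_add f_ng)
  hence "badd A (bneg A p) a \<in> I" using K a pc unfolding kerf_def by auto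
  hence "badd A p (badd A (bneg A p) a) \<in> I" using A.ideal_add[OF I p] by blast
  thus ?thesis using pc a by simp
qed

lemma pre_img:
  assumes P: "brace_ideal A P" and K: "kerf \<subseteq> P"
  shows "bcarrier A \<inter> f -` (f ` P) = P"
proof
  show "bcarrier A \<inter> f -` (f ` P) \<subseteq> P"
  proof
    fix a assume a: "a \<in> bcarrier A \<inter> f -` (f ` P)"
    then obtain p where p: "p \<in> P" "f a = f p" by blast
    show "a \<in> P" using ker_lemma[OF P K _ p(1) p(2)] a by blast
  qed
  show "P \<subseteq> bcarrier A \<inter> f -` (f ` P)" using A.ideal_sub[OF P] by blast
qed

lemma img_pre: "J \<subseteq> bcarrier B \<Longrightarrow> f ` (bcarrier A \<inter> f -` J) = J"
proof
  assume J: "J \<subseteq> bcarrier B"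
  show "f ` (bcarrier A \<inter> f -` J) \<subseteq> J" by blast
  show "J \<subseteq> f ` (bcarrier A \<inter> f -` J)"
  proof
    fix y assume y: "y \<in> J"
    have "y \<in> f ` bcarrier A" using J y by (auto simp: surj)
    then obtain x where "x \<in> bcarrier A" "y = f x" by blast
    thus "y \<in> f ` (bcarrier A \<inter> f -` J)" using y by blast
  qed
qed

lemma pre_prime:
  assumes Q: "prime_ideal B Q"
  shows "prime_ideal A (bcarrier A \<inter> f -` Q)"
proof (rule primeI)
  have QI: "brace_ideal B Q" and Qne: "Q \<noteq> bcarrier B" and Qs: "Q \<subseteq> bcarrier B"
    using Q B.prime_sub[OF Q] unfolding prime_ideal_def by (elim conjE, simp)+
  show "brace_ideal A (bcarrier A \<inter> f -` Q)" by (rule pre_ideal[OF QI])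
  show "bcarrier A \<inter> f -` Q \<noteq> bcarrier A"
  proof
    assume e: "bcarrier A \<inter> f -` Q = bcarrier A"
    have H: "f x \<in> Q" if x: "x \<in> bcarrier A" for x
    proof -
      have "x \<in> bcarrier A \<inter> f -` Q" using x by (subst e)
      thus ?thesis by simp
    qed
    have "bcarrier B \<subseteq> Q"
    proof
      fix y assume "y \<in> bcarrier B"
      hence "y \<in> f ` bcarrier A" by (simp add: surj)
      then obtain x where "x \<in> bcarrier A" "y = f x" by blast
      thus "y \<in> Q" using H by simp
    qed
    thus False using Qne Qs by blast
  qed
  fix X Y assume X: "X \<subseteq> bcarrier A" and Y: "Y \<subseteq> bcarrier A"
    and S: "\<And>x y. x \<in> X \<Longrightarrow> y \<in> Y \<Longrightarrow> bstar A x y \<in> bcarrier A \<inter> f -` Q"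
  have "f ` X \<subseteq> Q \<or> f ` Y \<subseteq> Q"
  proof (rule primeD[OF Q])
    show "f ` X \<subseteq> bcarrier B" "f ` Y \<subseteq> bcarrier B" using X Y by auto
    fix u v assume u: "u \<in> f ` X" and v: "v \<in> f ` Y"
    then obtain x y where xy: "x \<in> X" "y \<in> Y" "u = f x" "v = f y" by blast
    have "f (bstar A x y) \<in> Q" using S[OF xy(1,2)] by blast
    moreover have "f (bstar A x y) = bstar B u v"
    proof -
      have "x \<in> bcarrier A" "y \<in> bcarrier A" using xy X Y by auto
      thus ?thesis using xy by (simp add: f_star)
    qed
    ultimately show "bstar B u v \<in> Q" by simp
  qed
  thus "X \<subseteq> bcarrier A \<inter> f -` Q \<or> Y \<subseteq> bcarrier A \<inter> f -` Q" using X Y by blast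
qed

lemma img_prime:
  assumes P: "prime_ideal A P" and K: "kerf \<subseteq> P"
  shows "prime_ideal B (f ` P)"
proof (rule primeI)
  have PI: "brace_ideal A P" and Pne: "P \<noteq> bcarrier A" and Ps: "P \<subseteq> bcarrier A"
    using P A.prime_sub[OF P] unfolding prime_ideal_def by (elim conjE, simp)+
  show "brace_ideal B (f ` P)" by (rule img_ideal[OF PI])
  show "f ` P \<noteq> bcarrier B"
  proof
    assume e: "f ` P = bcarrier B"
    obtain a where a: "a \<in> bcarrier A" "a \<notin> P" using Pne Ps by blast
    have "f a \<in> f ` P" using e a(1) by simp
    then obtain p where "p \<in> P" "f a = f p" by blast
    thus False using ker_lemma[OF PI K a(1)] a(2) by blast
  qed
  fix X Y assume X: "X \<subseteq> bcarrier B" and Y: "Y \<subseteq> bcarrier B"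
    and S: "\<And>u v. u \<in> X \<Longrightarrow> v \<in> Y \<Longrightarrow> bstar B u v \<in> f ` P"
  have "bcarrier A \<inter> f -` X \<subseteq> P \<or> bcarrier A \<inter> f -` Y \<subseteq> P"
  proof (rule primeD[OF P])
    show "bcarrier A \<inter> f -` X \<subseteq> bcarrier A" "bcarrier A \<inter> f -` Y \<subseteq> bcarrier A" by auto
    fix x y assume x: "x \<in> bcarrier A \<inter> f -` X" and y: "y \<in> bcarrier A \<inter> f -` Y"
    have "bstar B (f x) (f y) \<in> f ` P" using S x y by blast
    moreover have "f (bstar A x y) = bstar B (f x) (f y)" using x y by (simp add: f_star)
    ultimately obtain p where p: "p \<in> P" "f (bstar A x y) = f p" by auto
    have "bstar A x y \<in> bcarrier A" using x y unfolding bstar_def by simp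
    thus "bstar A x y \<in> P" using ker_lemma[OF PI K _ p(1) p(2)] by blast
  qed
  hence "f ` (bcarrier A \<inter> f -` X) \<subseteq> f ` P \<or> f ` (bcarrier A \<inter> f -` Y) \<subseteq> f ` P" by blast
  thus "X \<subseteq> f ` P \<or> Y \<subseteq> f ` P" using img_pre[OF X] img_pre[OF Y] by simp
qed

theorem homeo:
  assumes K: "\<And>P. P \<in> Spec A \<Longrightarrow> kerf \<subseteq> P"
  shows "spec_top A homeomorphic_space spec_top B"
  unfolding homeomorphic_space_def homeomorphic_maps_def
proof (intro exI conjI)
  let ?phi = "\<lambda>P. f ` P" and ?psi = "\<lambda>Q. bcarrier A \<inter> f -` Q"
  have phiS: "?phi P \<in> Spec B" if "P \<in> Spec A" for P
    using img_prime K that unfolding Spec_def by blast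
  have psiS: "?psi Q \<in> Spec A" if "Q \<in> Spec B" for Q
    using pre_prime that unfolding Spec_def by blast
  show "continuous_map (spec_top A) (spec_top B) ?phi"
    unfolding continuous_map_closedin A.topspace_spec B.topspace_spec
  proof (intro conjI allI impI)
    show "?phi \<in> Spec A \<rightarrow> Spec B" using phiS by blast
    fix C assume "closedin (spec_top B) C"
    then obtain J where J: "brace_ideal B J" "C = Hset B J" using B.closedin_spec by blast
    have "{x \<in> Spec A. ?phi x \<in> C} = Hset A (?psi J)"
    proof -
      have "J \<subseteq> f ` P \<longleftrightarrow> ?psi J \<subseteq> P" if P: "P \<in> Spec A" for P
      proof
        assume JP: "J \<subseteq> f ` P"
        show "?psi J \<subseteq> P"
        proof
          fix a assume a: "a \<in> ?psi J"
          then obtain p where p: "p \<in> P" "f a = f p" using JP by blast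
          show "a \<in> P" using ker_lemma[OF A.prime_ideal_ideal[OF P] K[OF P] _ p(1) p(2)] a by blast
        qed
      next
        assume "?psi J \<subseteq> P"
        thus "J \<subseteq> f ` P" using img_pre[OF B.ideal_sub[OF J(1)]] by blast
      qed
      thus ?thesis unfolding J(2) Hset_def using phiS by auto
    qed
    thus "closedin (spec_top A) {x \<in> Spec A. ?phi x \<in> C}"
      using A.closedin_spec pre_ideal[OF J(1)] by auto
  qed
  show "continuous_map (spec_top B) (spec_top A) ?psi"
    unfolding continuous_map_closedin A.topspace_spec B.topspace_spec
  proof (intro conjI allI impI)
    show "?psi \<in> Spec B \<rightarrow> Spec A" using psiS by blast
    fix C assume "closedin (spec_top A) C"
    then obtain I where I: "brace_ideal A I" "C = Hset A I" using A.closedin_spec by blast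
    have "{x \<in> Spec B. ?psi x \<in> C} = Hset B (f ` I)"
      unfolding I(2) Hset_def using psiS A.ideal_sub[OF I(1)] by blast
    thus "closedin (spec_top B) {x \<in> Spec B. ?psi x \<in> C}"
      using B.closedin_spec img_ideal[OF I(1)] by auto
  qed
  show "\<forall>x\<in>topspace (spec_top A). ?psi (?phi x) = x"
    unfolding A.topspace_spec by (simp add: pre_img A.prime_ideal_ideal K)
  show "\<forall>y\<in>topspace (spec_top B). ?phi (?psi y) = y"
    unfolding B.topspace_spec by (simp add: img_pre B.prime_ideal_ideal B.ideal_sub)
qed

end




lemma (in sbrace) cinv_of_circ[simp]: "a \<in> cr \<Longrightarrow> b \<in> cr \<Longrightarrow> cinv (a \<cdot> b) = cinv b \<cdot> cinv a"
  using C.inv_mult_group by simp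
lemma (in sbrace) cinv_cinv[simp]: "a \<in> cr \<Longrightarrow> cinv (cinv a) = a"
  using C.inv_inv by simp

locale qbrace = sbrace +
  fixes N assumes N: "brace_ideal A N"
begin

abbreviation "pj a \<equiv> bcoset A a N"

lemma Nsub: "N \<subseteq> cr" using ideal_sub[OF N] .

lemma pi_eq: "a \<in> cr \<Longrightarrow> b \<in> cr \<Longrightarrow> pj a = pj b \<longleftrightarrow> ng a \<oplus> b \<in> N"
proof
  assume a: "a \<in> cr" and b: "b \<in> cr" and e: "pj a = pj b"
  have "b \<in> pj b" unfolding bcoset_def using b ideal_ze[OF N] by (metis add_ze(1) image_eqI)
  then obtain n where n: "n \<in> N" "b = a \<oplus> n" using e unfolding bcoset_def by auto
  thus "ng a \<oplus> b \<in> N" using a Nsub by auto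
next
  assume a: "a \<in> cr" and b: "b \<in> cr" and m: "ng a \<oplus> b \<in> N"
  define m where "m = ng a \<oplus> b"
  have mN: "m \<in> N" using m unfolding m_def .
  have mc: "m \<in> cr" using a b unfolding m_def by simp
  have e1: "a \<oplus> m = b" unfolding m_def using a b by simp
  have e2: "b \<oplus> ng m = a" unfolding m_def using a b by simp
  show "pj a = pj b"
  proof
    show "pj a \<subseteq> pj b"
    proof
      fix x assume "x \<in> pj a"
      then obtain n where n: "n \<in> N" "x = a \<oplus> n" unfolding bcoset_def by auto
      hence "x = b \<oplus> (ng m \<oplus> n)" using e2 mc a b Nsub by (auto simp flip: add_assoc)
      moreover have "ng m \<oplus> n \<in> N" using ideal_add[OF N ideal_ng[OF N mN] n(1)] .
      ultimately show "x \<in> pj b" unfolding bcoset_def by blast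
    qed
    show "pj b \<subseteq> pj a"
    proof
      fix x assume "x \<in> pj b"
      then obtain n where n: "n \<in> N" "x = b \<oplus> n" unfolding bcoset_def by auto
      hence "x = a \<oplus> (m \<oplus> n)" using e1 mc a b Nsub by (auto simp flip: add_assoc)
      moreover have "m \<oplus> n \<in> N" using ideal_add[OF N mN n(1)] .
      ultimately show "x \<in> pj a" unfolding bcoset_def by blast
    qed
  qed
qed

lemma rel_circ: "a \<in> cr \<Longrightarrow> b \<in> cr \<Longrightarrow> (ng a \<oplus> b \<in> N) = (cinv a \<cdot> b \<in> N)"
proof -
  assume a: "a \<in> cr" and b: "b \<in> cr"
  define m where "m = cinv a \<cdot> b"
  have mc: "m \<in> cr" unfolding m_def using a b by simp
  have "b = a \<cdot> m" unfolding m_def using a b by simp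
  also have "\<dots> = a \<oplus> lam a m" using a mc by (simp add: circ_eq)
  finally have "ng a \<oplus> b = lam a m" using a mc by simp
  moreover have "m \<in> N \<Longrightarrow> lam a m \<in> N" using ideal_lam[OF N a] by blast
  moreover have "lam a m \<in> N \<Longrightarrow> m \<in> N" using ideal_lam[OF N cinv_closed[OF a]] lam_inv2[OF a mc] by metis
  ultimately show ?thesis unfolding m_def by metis
qed

lemma add_wd:
  assumes c: "a \<in> cr" "a' \<in> cr" "b \<in> cr" "b' \<in> cr" and e: "pj a = pj a'" "pj b = pj b'"
  shows "pj (a \<oplus> b) = pj (a' \<oplus> b')"
proof -
  have n1: "ng a \<oplus> a' \<in> N" and n2: "ng b \<oplus> b' \<in> N" using e c pi_eq by auto
  have "ng (a \<oplus> b) \<oplus> (a' \<oplus> b') = (ng b \<oplus> ((ng a \<oplus> a') \<oplus> ng (ng b))) \<oplus> (ng b \<oplus> b')"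
    using c by simp
  moreover have "(ng b \<oplus> ((ng a \<oplus> a') \<oplus> ng (ng b))) \<oplus> (ng b \<oplus> b') \<in> N"
    using ideal_add[OF N ideal_conj[OF N ng_closed[OF c(3)] n1] n2] c by simp
  ultimately show ?thesis using pi_eq c by simp
qed

lemma circ_wd:
  assumes c: "a \<in> cr" "a' \<in> cr" "b \<in> cr" "b' \<in> cr" and e: "pj a = pj a'" "pj b = pj b'"
  shows "pj (a \<cdot> b) = pj (a' \<cdot> b')"
proof -
  have n1: "cinv a \<cdot> a' \<in> N" and n2: "cinv b \<cdot> b' \<in> N" using e c pi_eq rel_circ by auto
  have "cinv (a \<cdot> b) \<cdot> (a' \<cdot> b') = (cinv b \<cdot> ((cinv a \<cdot> a') \<cdot> cinv (cinv b))) \<cdot> (cinv b \<cdot> b')"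
    using c by simp
  moreover have "(cinv b \<cdot> ((cinv a \<cdot> a') \<cdot> cinv (cinv b))) \<cdot> (cinv b \<cdot> b') \<in> N"
    using ideal_circ[OF N ideal_cconj[OF N cinv_closed[OF c(3)] n1] n2] c by simp
  ultimately show ?thesis using pi_eq rel_circ c by simp
qed

abbreviation "Qb \<equiv> quotient_brace A N"

lemma q_car: "bcarrier Qb = pj ` cr"
  unfolding quotient_brace_def by auto

lemma q_add: "a \<in> cr \<Longrightarrow> b \<in> cr \<Longrightarrow> badd Qb (pj a) (pj b) = pj (a \<oplus> b)"
proof -
  assume a: "a \<in> cr" and b: "b \<in> cr"
  have "{bcoset A (a' \<oplus> b') N | a' b'. a' \<in> cr \<and> b' \<in> cr \<and> pj a = pj a' \<and> pj b = pj b'} = {pj (a \<oplus> b)}"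
    using a b add_wd by blast
  thus ?thesis unfolding quotient_brace_def by simp
qed

lemma q_circ: "a \<in> cr \<Longrightarrow> b \<in> cr \<Longrightarrow> bcirc Qb (pj a) (pj b) = pj (a \<cdot> b)"
proof -
  assume a: "a \<in> cr" and b: "b \<in> cr"
  have "{bcoset A (a' \<cdot> b') N | a' b'. a' \<in> cr \<and> b' \<in> cr \<and> pj a = pj a' \<and> pj b = pj b'} = {pj (a \<cdot> b)}"
    using a b circ_wd by blast
  thus ?thesis unfolding quotient_brace_def by simp
qed

lemma q_zero: "bzero Qb = pj ze" unfolding quotient_brace_def by simp

lemma q_sb: "skew_brace Qb"
  by (rule skew_brace_image[OF sb q_car]) (simp_all add: q_add q_circ q_zero)

lemma q_hom: "bhom A Qb pj"
  unfolding bhom_def bhom_axioms_def sbrace_def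
  using sb q_sb q_car q_add q_circ by simp

lemma q_ker: "a \<in> cr \<Longrightarrow> pj a = bzero Qb \<Longrightarrow> a \<in> N"
  using pi_eq[of a ze] q_zero ideal_ng[OF N] by (metis add_ze(1) ng_closed ng_ng ze_closed)

end

theorem corollary4p17:
  fixes A :: "'a brace"
  assumes "skew_brace A"
  shows "spec_top A homeomorphic_space spec_top (quotient_brace A (Nil_brace A))"
proof -
  interpret sbrace A using assms by (simp add: sbrace_def)
  have N: "brace_ideal A (Nil_brace A)" unfolding Nil_brace_def
    by (rule ideal_Inter) (auto intro: prime_ideal_ideal)
  interpret qbrace A "Nil_brace A" by unfold_locales (rule N)
  interpret h: bhom A "quotient_brace A (Nil_brace A)" "\<lambda>a. bcoset A a (Nil_brace A)" by (rule q_hom)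
  show ?thesis
  proof (rule h.homeo)
    fix P assume P: "P \<in> Spec A"
    have "h.kerf \<subseteq> Nil_brace A" unfolding h.kerf_def using q_ker by blast
    also have "Nil_brace A \<subseteq> P" unfolding Nil_brace_def using P by blast
    finally show "h.kerf \<subseteq> P" .
  qed
qed

end
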